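(* For every integer $n\ge0$, the real vector space $\operatorname{Infr}_n$ of inframonogenic homogeneous polynomials of degree $n$ has dimension $6n+3$ over $\mathbb{R}$.
   Context: $\mathbb{H}$ denotes the real quaternions with basis $e_0=1,e_1,e_2,e_3$ and $e_1^2=e_2^2=e_3^2=e_1e_2e_3=-1$; $\mathbb{R}^3$ is identified with the reduced quaternions $x_0+x_1e_1+x_2e_2$. $\operatorname{Infr}_n$ is the set of functions $f=f_0+f_1e_1+f_2e_2$ where each $f_i$ is a real homogeneous polynomial of degree $n$ in $x_0,x_1,x_2$, such that $\overline{\partial} f\overline{\partial}=0$. Here, with $\partial_i=\partial/\partial x_i$, $\overline{\partial} g=\partial_0 g+e_1\partial_1 g+e_2\partial_2 g$ (left action), $g\overline{\partial}=\partial_0 g+(\partial_1 g)e_1+(\partial_2 g)e_2$ (right action), and $\overline{\partial} f\overline{\partial}:=\overline{\partial}(f\overline{\partial})$. *)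

theory Defs
  imports "HOL-Analysis.Analysis" "HOL-Library.Function_Algebras"
begin

text \<open>Real quaternions q0 + q1 e1 + q2 e2 + q3 e3 with the Hamilton product
  (e1^2 = e2^2 = e3^2 = e1 e2 e3 = -1).\<close>
datatype quat = Q (q0: real) (q1: real) (q2: real) (q3: real)

definition qadd :: "quat \<Rightarrow> quat \<Rightarrow> quat" where
  "qadd a b = Q (q0 a + q0 b) (q1 a + q1 b) (q2 a + q2 b) (q3 a + q3 b)"

definition qscale :: "real \<Rightarrow> quat \<Rightarrow> quat" where
  "qscale r a = Q (r * q0 a) (r * q1 a) (r * q2 a) (r * q3 a)"

definition qmul :: "quat \<Rightarrow> quat \<Rightarrow> quat" where
  "qmul a b = Q
     (q0 a * q0 b - q1 a * q1 b - q2 a * q2 b - q3 a * q3 b)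
     (q0 a * q1 b + q1 a * q0 b + q2 a * q3 b - q3 a * q2 b)
     (q0 a * q2 b - q1 a * q3 b + q2 a * q0 b + q3 a * q1 b)
     (q0 a * q3 b + q1 a * q2 b - q2 a * q1 b + q3 a * q0 b)"

definition qe1 :: quat where "qe1 = Q 0 1 0 0"
definition qe2 :: quat where "qe2 = Q 0 0 1 0"

type_synonym pt = "real \<times> real \<times> real"

definition qderiv :: "(real \<Rightarrow> quat) \<Rightarrow> real \<Rightarrow> quat" where
  "qderiv g t = Q (deriv (\<lambda>s. q0 (g s)) t) (deriv (\<lambda>s. q1 (g s)) t)
                  (deriv (\<lambda>s. q2 (g s)) t) (deriv (\<lambda>s. q3 (g s)) t)"

definition pd0 :: "(pt \<Rightarrow> quat) \<Rightarrow> pt \<Rightarrow> quat" where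
  "pd0 g x = (case x of (a, b, c) \<Rightarrow> qderiv (\<lambda>t. g (t, b, c)) a)"
definition pd1 :: "(pt \<Rightarrow> quat) \<Rightarrow> pt \<Rightarrow> quat" where
  "pd1 g x = (case x of (a, b, c) \<Rightarrow> qderiv (\<lambda>t. g (a, t, c)) b)"
definition pd2 :: "(pt \<Rightarrow> quat) \<Rightarrow> pt \<Rightarrow> quat" where
  "pd2 g x = (case x of (a, b, c) \<Rightarrow> qderiv (\<lambda>t. g (a, b, t)) c)"

definition dbar_left :: "(pt \<Rightarrow> quat) \<Rightarrow> pt \<Rightarrow> quat" where
  "dbar_left g x = qadd (pd0 g x) (qadd (qmul qe1 (pd1 g x)) (qmul qe2 (pd2 g x)))"

definition dbar_right :: "(pt \<Rightarrow> quat) \<Rightarrow> pt \<Rightarrow> quat" where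
  "dbar_right g x = qadd (pd0 g x) (qadd (qmul (pd1 g x) qe1) (qmul (pd2 g x) qe2))"

definition hom_poly :: "nat \<Rightarrow> (pt \<Rightarrow> real) \<Rightarrow> bool" where
  "hom_poly n p \<longleftrightarrow> (\<exists>c :: nat \<Rightarrow> nat \<Rightarrow> real. \<forall>a b d.
      p (a, b, d) = (\<Sum>i\<le>n. \<Sum>j\<le>n - i. c i j * a ^ i * b ^ j * d ^ (n - i - j)))"

text \<open>Infr_n: reduced-quaternion-valued f = f0 + f1 e1 + f2 e2 with each f_i a
  homogeneous polynomial of degree n, such that dbar (f dbar) = 0.\<close>
definition Infr :: "nat \<Rightarrow> (pt \<Rightarrow> quat) set" where
  "Infr n = {f. (\<forall>x. q3 (f x) = 0)
              \<and> hom_poly n (\<lambda>x. q0 (f x)) \<and> hom_poly n (\<lambda>x. q1 (f x))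
              \<and> hom_poly n (\<lambda>x. q2 (f x))
              \<and> (\<forall>x. dbar_left (dbar_right f) x = Q 0 0 0 0)}"

definition fscale :: "real \<Rightarrow> (pt \<Rightarrow> quat) \<Rightarrow> (pt \<Rightarrow> quat)" where
  "fscale r f = (\<lambda>x. qscale r (f x))"

instantiation quat :: ab_group_add
begin
definition "0 = Q 0 0 0 0"
definition "a + b = qadd a b"
definition "- a = Q (- q0 a) (- q1 a) (- q2 a) (- q3 a)"
definition "a - b = qadd a (- b)" for a b :: quat
instance
  by standard (auto simp: zero_quat_def plus_quat_def uminus_quat_def minus_quat_def qadd_def)
end

end

theory Submission
  imports Defs
begin



lemma uni_deriv_gen:
  fixes C :: "nat \<Rightarrow> real"
  shows "((\<lambda>t. \<Sum>i<N. C i * t^i) has_real_derivative (\<Sum>i<N. C i * (real i * a^(i - 1)))) (at a)"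
proof (induction N)
  case 0 then show ?case by simp
next
  case (Suc N)
  have "((\<lambda>t. C N * t^N) has_real_derivative C N * (real N * a^(N - 1))) (at a)"
    by (intro DERIV_cmult) (simp add: DERIV_pow)
  from DERIV_add[OF Suc this] show ?case by simp
qed

lemma uni_deriv:
  fixes C :: "nat \<Rightarrow> real"
  assumes "C N = 0"
  shows "deriv (\<lambda>t. \<Sum>i<N. C i * t^i) a = (\<Sum>i<N. real (Suc i) * C (Suc i) * a^i)"
proof (cases N)
  case 0 then show ?thesis by simp
next
  case (Suc M)
  have "deriv (\<lambda>t. \<Sum>i<N. C i * t^i) a = (\<Sum>i<N. C i * (real i * a^(i - 1)))"
    by (rule DERIV_imp_deriv[OF uni_deriv_gen])
  also have "\<dots> = (\<Sum>i<M. C (Suc i) * (real (Suc i) * a^i))"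
    unfolding Suc by (subst sum.lessThan_Suc_shift) simp
  also have "\<dots> = (\<Sum>i<N. real (Suc i) * C (Suc i) * a^i)"
    using assms unfolding Suc by (simp add: algebra_simps)
  finally show ?thesis .
qed

lemma uni_zero:
  fixes C :: "nat \<Rightarrow> real"
  assumes "\<forall>t. (\<Sum>i<N. C i * t^i) = 0" "i < N"
  shows "C i = 0"
proof (cases N)
  case 0 then show ?thesis using assms by simp
next
  case (Suc M)
  have "\<forall>t. (\<Sum>i\<le>M. C i * t^i) = 0" using assms(1) unfolding Suc lessThan_Suc_atMost .
  then show ?thesis using polyfun_eq_0[of C M] assms(2) Suc by auto
qed



definition ev :: "nat \<Rightarrow> (nat \<Rightarrow> nat \<Rightarrow> nat \<Rightarrow> real) \<Rightarrow> real \<Rightarrow> real \<Rightarrow> real \<Rightarrow> real" where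
  "ev N c a b d = (\<Sum>i<N. \<Sum>j<N. \<Sum>l<N. c i j l * a^i * b^j * d^l)"

definition bx3 :: "nat \<Rightarrow> (nat \<Rightarrow> nat \<Rightarrow> nat \<Rightarrow> real) \<Rightarrow> bool" where
  "bx3 N c \<longleftrightarrow> (\<forall>i j l. (N \<le> i \<or> N \<le> j \<or> N \<le> l) \<longrightarrow> c i j l = 0)"

definition D0 :: "(nat \<Rightarrow> nat \<Rightarrow> nat \<Rightarrow> real) \<Rightarrow> nat \<Rightarrow> nat \<Rightarrow> nat \<Rightarrow> real" where
  "D0 c i j l = real (Suc i) * c (Suc i) j l"
definition D1 :: "(nat \<Rightarrow> nat \<Rightarrow> nat \<Rightarrow> real) \<Rightarrow> nat \<Rightarrow> nat \<Rightarrow> nat \<Rightarrow> real" where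
  "D1 c i j l = real (Suc j) * c i (Suc j) l"
definition D2 :: "(nat \<Rightarrow> nat \<Rightarrow> nat \<Rightarrow> real) \<Rightarrow> nat \<Rightarrow> nat \<Rightarrow> nat \<Rightarrow> real" where
  "D2 c i j l = real (Suc l) * c i j (Suc l)"

lemma bx3_D: "bx3 N c \<Longrightarrow> bx3 N (D0 c)" "bx3 N c \<Longrightarrow> bx3 N (D1 c)" "bx3 N c \<Longrightarrow> bx3 N (D2 c)"
  unfolding bx3_def D0_def D1_def D2_def by auto

lemma ev_a: "ev N c t b d = (\<Sum>i<N. (\<Sum>j<N. \<Sum>l<N. c i j l * b^j * d^l) * t^i)"
  unfolding ev_def by (simp add: sum_distrib_left sum_distrib_right mult_ac)

lemma ev_b: "ev N c a t d = (\<Sum>j<N. (\<Sum>i<N. \<Sum>l<N. c i j l * a^i * d^l) * t^j)"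
proof -
  have "ev N c a t d = (\<Sum>j<N. \<Sum>i<N. \<Sum>l<N. c i j l * a^i * t^j * d^l)"
    unfolding ev_def by (rule sum.swap)
  then show ?thesis by (simp add: sum_distrib_left sum_distrib_right mult_ac)
qed

lemma ev_d: "ev N c a b t = (\<Sum>l<N. (\<Sum>i<N. \<Sum>j<N. c i j l * a^i * b^j) * t^l)"
proof -
  have "ev N c a b t = (\<Sum>i<N. \<Sum>l<N. \<Sum>j<N. c i j l * a^i * b^j * t^l)"
    unfolding ev_def by (intro sum.cong refl sum.swap)
  also have "\<dots> = (\<Sum>l<N. \<Sum>i<N. \<Sum>j<N. c i j l * a^i * b^j * t^l)"
    by (rule sum.swap)
  finally show ?thesis by (simp add: sum_distrib_left sum_distrib_right mult_ac)
qed

lemma deriv_ev0: assumes "bx3 N c" shows "deriv (\<lambda>t. ev N c t b d) a = ev N (D0 c) a b d"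
proof -
  have "deriv (\<lambda>t. ev N c t b d) a = deriv (\<lambda>t. \<Sum>i<N. (\<Sum>j<N. \<Sum>l<N. c i j l * b^j * d^l) * t^i) a"
    unfolding ev_a ..
  also have "\<dots> = (\<Sum>i<N. real (Suc i) * (\<Sum>j<N. \<Sum>l<N. c (Suc i) j l * b^j * d^l) * a^i)"
    by (rule uni_deriv) (use assms in \<open>simp add: bx3_def\<close>)
  also have "\<dots> = ev N (D0 c) a b d"
    unfolding ev_a D0_def by (simp add: sum_distrib_left algebra_simps)
  finally show ?thesis .
qed

lemma deriv_ev1: assumes "bx3 N c" shows "deriv (\<lambda>t. ev N c a t d) b = ev N (D1 c) a b d"
proof -
  have "deriv (\<lambda>t. ev N c a t d) b = deriv (\<lambda>t. \<Sum>j<N. (\<Sum>i<N. \<Sum>l<N. c i j l * a^i * d^l) * t^j) b"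
    unfolding ev_b ..
  also have "\<dots> = (\<Sum>j<N. real (Suc j) * (\<Sum>i<N. \<Sum>l<N. c i (Suc j) l * a^i * d^l) * b^j)"
    by (rule uni_deriv) (use assms in \<open>simp add: bx3_def\<close>)
  also have "\<dots> = ev N (D1 c) a b d"
    unfolding ev_b[of N "D1 c"] D1_def by (simp add: sum_distrib_left algebra_simps)
  finally show ?thesis .
qed

lemma deriv_ev2: assumes "bx3 N c" shows "deriv (\<lambda>t. ev N c a b t) d = ev N (D2 c) a b d"
proof -
  have "deriv (\<lambda>t. ev N c a b t) d = deriv (\<lambda>t. \<Sum>l<N. (\<Sum>i<N. \<Sum>j<N. c i j l * a^i * b^j) * t^l) d"
    unfolding ev_d ..
  also have "\<dots> = (\<Sum>l<N. real (Suc l) * (\<Sum>i<N. \<Sum>j<N. c i j (Suc l) * a^i * b^j) * d^l)"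
    by (rule uni_deriv) (use assms in \<open>simp add: bx3_def\<close>)
  also have "\<dots> = ev N (D2 c) a b d"
    unfolding ev_d[of N "D2 c"] D2_def by (simp add: sum_distrib_left algebra_simps)
  finally show ?thesis .
qed

lemma ev_zero:
  assumes "bx3 N c" "\<forall>a b d. ev N c a b d = 0"
  shows "c i j l = 0"
proof (cases "i < N \<and> j < N \<and> l < N")
  case False then show ?thesis using assms(1) by (auto simp: bx3_def)
next
  case True
  have 1: "(\<Sum>j<N. \<Sum>l<N. c i j l * b^j * d^l) = 0" for b d
    using uni_zero[where N=N and C="\<lambda>i. \<Sum>j<N. \<Sum>l<N. c i j l * b^j * d^l" and i=i] assms(2) True
    by (auto simp: ev_a)
  have 2: "(\<Sum>l<N. c i j l * d^l) = 0" for d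
  proof -
    have "\<forall>b. (\<Sum>j<N. (\<Sum>l<N. c i j l * d^l) * b^j) = 0"
      using 1[of _ d] by (simp add: sum_distrib_left sum_distrib_right mult_ac)
    then show ?thesis using uni_zero[where N=N and C="\<lambda>j. \<Sum>l<N. c i j l * d^l" and i=j] True by auto
  qed
  show ?thesis using uni_zero[where N=N and C="\<lambda>l. c i j l" and i=l] 2 True by auto
qed

lemma ev_add: "ev N (\<lambda>i j l. c i j l + c' i j l) a b d = ev N c a b d + ev N c' a b d"
  unfolding ev_def by (simp add: algebra_simps sum.distrib)
lemma ev_diff: "ev N (\<lambda>i j l. c i j l - c' i j l) a b d = ev N c a b d - ev N c' a b d"
  unfolding ev_def by (simp add: algebra_simps sum_subtractf)
lemma ev_neg: "ev N (\<lambda>i j l. - c i j l) a b d = - ev N c a b d"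
  unfolding ev_def by (simp add: sum_negf)
lemma ev_scale: "ev N (\<lambda>i j l. r * c i j l) a b d = r * ev N c a b d"
  unfolding ev_def by (simp add: sum_distrib_left algebra_simps)
lemma ev_0: "ev N (\<lambda>i j l. 0) a b d = 0"
  unfolding ev_def by simp



definition G :: "nat \<Rightarrow> (nat \<Rightarrow> nat \<Rightarrow> nat \<Rightarrow> nat \<Rightarrow> real) \<Rightarrow> pt \<Rightarrow> quat" where
  "G N c x = (case x of (a, b, d) \<Rightarrow>
     Q (ev N (c 0) a b d) (ev N (c 1) a b d) (ev N (c 2) a b d) (ev N (c 3) a b d))"

lemma G_simp: "G N c (a, b, d) = Q (ev N (c 0) a b d) (ev N (c 1) a b d) (ev N (c 2) a b d) (ev N (c 3) a b d)"
  by (simp add: G_def)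

lemma pd0_G: assumes "\<forall>s. bx3 N (c s)" shows "pd0 (G N c) x = G N (\<lambda>s. D0 (c s)) x"
  using assms by (cases x) (simp add: pd0_def qderiv_def G_simp deriv_ev0)
lemma pd1_G: assumes "\<forall>s. bx3 N (c s)" shows "pd1 (G N c) x = G N (\<lambda>s. D1 (c s)) x"
  using assms by (cases x) (simp add: pd1_def qderiv_def G_simp deriv_ev1)
lemma pd2_G: assumes "\<forall>s. bx3 N (c s)" shows "pd2 (G N c) x = G N (\<lambda>s. D2 (c s)) x"
  using assms by (cases x) (simp add: pd2_def qderiv_def G_simp deriv_ev2 del: ev_def)

definition R1 :: "(nat \<Rightarrow> nat \<Rightarrow> nat \<Rightarrow> nat \<Rightarrow> real) \<Rightarrow> nat \<Rightarrow> nat \<Rightarrow> nat \<Rightarrow> nat \<Rightarrow> real" where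
  "R1 c s i j l = (if s = 0 then D0 (c 0) i j l - D1 (c 1) i j l - D2 (c 2) i j l
     else if s = 1 then D0 (c 1) i j l + D1 (c 0) i j l - D2 (c 3) i j l
     else if s = 2 then D0 (c 2) i j l + D1 (c 3) i j l + D2 (c 0) i j l
     else if s = 3 then D0 (c 3) i j l - D1 (c 2) i j l + D2 (c 1) i j l else 0)"

definition L1 :: "(nat \<Rightarrow> nat \<Rightarrow> nat \<Rightarrow> nat \<Rightarrow> real) \<Rightarrow> nat \<Rightarrow> nat \<Rightarrow> nat \<Rightarrow> nat \<Rightarrow> real" where
  "L1 c s i j l = (if s = 0 then D0 (c 0) i j l - D1 (c 1) i j l - D2 (c 2) i j l
     else if s = 1 then D0 (c 1) i j l + D1 (c 0) i j l + D2 (c 3) i j l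
     else if s = 2 then D0 (c 2) i j l - D1 (c 3) i j l + D2 (c 0) i j l
     else if s = 3 then D0 (c 3) i j l + D1 (c 2) i j l - D2 (c 1) i j l else 0)"

lemma R1_parts: "R1 c 0 = (\<lambda>i j l. D0 (c 0) i j l - D1 (c 1) i j l - D2 (c 2) i j l)"
  "R1 c 1 = (\<lambda>i j l. D0 (c 1) i j l + D1 (c 0) i j l - D2 (c 3) i j l)"
  "R1 c 2 = (\<lambda>i j l. D0 (c 2) i j l + D1 (c 3) i j l + D2 (c 0) i j l)"
  "R1 c 3 = (\<lambda>i j l. D0 (c 3) i j l - D1 (c 2) i j l + D2 (c 1) i j l)"
  by (intro ext; simp add: R1_def)+
lemma R1_Suc0: "R1 c (Suc 0) = (\<lambda>i j l. D0 (c 1) i j l + D1 (c 0) i j l - D2 (c 3) i j l)"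
  using R1_parts(2) by simp
lemma L1_parts: "L1 c 0 = (\<lambda>i j l. D0 (c 0) i j l - D1 (c 1) i j l - D2 (c 2) i j l)"
  "L1 c 1 = (\<lambda>i j l. D0 (c 1) i j l + D1 (c 0) i j l + D2 (c 3) i j l)"
  "L1 c 2 = (\<lambda>i j l. D0 (c 2) i j l - D1 (c 3) i j l + D2 (c 0) i j l)"
  "L1 c 3 = (\<lambda>i j l. D0 (c 3) i j l + D1 (c 2) i j l - D2 (c 1) i j l)"
  by (intro ext; simp add: L1_def)+
lemma L1_Suc0: "L1 c (Suc 0) = (\<lambda>i j l. D0 (c 1) i j l + D1 (c 0) i j l + D2 (c 3) i j l)"
  using L1_parts(2) by simp

lemma bx3_R1: "\<forall>s. bx3 N (c s) \<Longrightarrow> bx3 N (R1 c s)"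
  unfolding bx3_def R1_def D0_def D1_def D2_def by auto

lemma dbar_right_G: assumes "\<forall>s. bx3 N (c s)" shows "dbar_right (G N c) x = G N (R1 c) x"
proof (cases x)
  case (fields a b d)
  show ?thesis
    unfolding dbar_right_def pd0_G[OF assms] pd1_G[OF assms] pd2_G[OF assms] fields
    by (simp add: G_simp qadd_def qmul_def qe1_def qe2_def R1_parts R1_Suc0 ev_add ev_diff)
qed

lemma dbar_left_G: assumes "\<forall>s. bx3 N (c s)" shows "dbar_left (G N c) x = G N (L1 c) x"
proof (cases x)
  case (fields a b d)
  show ?thesis
    unfolding dbar_left_def pd0_G[OF assms] pd1_G[OF assms] pd2_G[OF assms] fields
    by (simp add: G_simp qadd_def qmul_def qe1_def qe2_def L1_parts L1_Suc0 ev_add ev_diff)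
qed

definition EE :: "(nat \<Rightarrow> nat \<Rightarrow> nat \<Rightarrow> nat \<Rightarrow> real) \<Rightarrow> nat \<Rightarrow> nat \<Rightarrow> nat \<Rightarrow> nat \<Rightarrow> real" where
  "EE c s i j l = (if s = 0 then
      real (Suc i) * real (Suc (Suc i)) * c 0 (Suc (Suc i)) j l
    - real (Suc j) * real (Suc (Suc j)) * c 0 i (Suc (Suc j)) l
    - real (Suc l) * real (Suc (Suc l)) * c 0 i j (Suc (Suc l))
    - 2 * real (Suc i) * real (Suc j) * c 1 (Suc i) (Suc j) l
    - 2 * real (Suc i) * real (Suc l) * c 2 (Suc i) j (Suc l)
   else if s = 1 then
      real (Suc i) * real (Suc (Suc i)) * c 1 (Suc (Suc i)) j l
    + 2 * real (Suc i) * real (Suc j) * c 0 (Suc i) (Suc j) l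
    - real (Suc j) * real (Suc (Suc j)) * c 1 i (Suc (Suc j)) l
    + real (Suc l) * real (Suc (Suc l)) * c 1 i j (Suc (Suc l))
    - 2 * real (Suc j) * real (Suc l) * c 2 i (Suc j) (Suc l)
   else if s = 2 then
      real (Suc i) * real (Suc (Suc i)) * c 2 (Suc (Suc i)) j l
    + 2 * real (Suc i) * real (Suc l) * c 0 (Suc i) j (Suc l)
    - 2 * real (Suc j) * real (Suc l) * c 1 i (Suc j) (Suc l)
    + real (Suc j) * real (Suc (Suc j)) * c 2 i (Suc (Suc j)) l
    - real (Suc l) * real (Suc (Suc l)) * c 2 i j (Suc (Suc l))
   else 0)"

lemma EE_eq: assumes "\<And>i j l. c 3 i j l = 0" shows "L1 (R1 c) s i j l = EE c s i j l"
  using assms unfolding L1_def R1_def EE_def D0_def D1_def D2_def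
  by (simp add: algebra_simps)

lemma bx3_EE: "\<forall>s. bx3 N (c s) \<Longrightarrow> bx3 N (EE c s)"
  unfolding bx3_def EE_def by auto

lemma pde_iff:
  assumes "\<forall>s. bx3 N (c s)" "\<And>i j l. c 3 i j l = 0"
  shows "(\<forall>x. dbar_left (dbar_right (G N c)) x = Q 0 0 0 0) \<longleftrightarrow> (\<forall>s i j l. EE c s i j l = 0)"
proof -
  have br: "\<forall>s. bx3 N (R1 c s)" using bx3_R1[OF assms(1)] by blast
  have e: "dbar_left (dbar_right (G N c)) x = G N (EE c) x" for x
  proof -
    have "dbar_right (G N c) = G N (R1 c)" using dbar_right_G[OF assms(1)] by blast
    then have "dbar_left (dbar_right (G N c)) x = G N (L1 (R1 c)) x" using dbar_left_G[OF br] by simp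
    also have "L1 (R1 c) = EE c" using EE_eq[of c, OF assms(2)] by blast
    finally show ?thesis .
  qed
  have bE: "\<forall>s. bx3 N (EE c s)" using bx3_EE[OF assms(1)] by blast
  show ?thesis
  proof
    assume h: "\<forall>x. dbar_left (dbar_right (G N c)) x = Q 0 0 0 0"
    have z: "\<forall>a b d. ev N (EE c s) a b d = 0" if "s < 4" for s
    proof (intro allI)
      fix a b d
      from h[rule_format, of "(a,b,d)"] e[of "(a,b,d)"]
      have "G N (EE c) (a,b,d) = Q 0 0 0 0" by simp
      moreover have "s = 0 \<or> s = 1 \<or> s = 2 \<or> s = 3" using that by auto
      ultimately show "ev N (EE c s) a b d = 0"
        by (auto simp: G_simp)
    qed
    show "\<forall>s i j l. EE c s i j l = 0"
    proof (intro allI)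
      fix s i j l
      show "EE c s i j l = 0"
      proof (cases "s < 4")
        case True then show ?thesis using ev_zero[OF bE[rule_format] z] by blast
      next
        case False then show ?thesis by (simp add: EE_def)
      qed
    qed
  next
    assume h: "\<forall>s i j l. EE c s i j l = 0"
    then have "EE c = (\<lambda>s i j l. 0)" by (intro ext) auto
    then show "\<forall>x. dbar_left (dbar_right (G N c)) x = Q 0 0 0 0"
      using e by (auto simp: G_def ev_0 split: prod.splits)
  qed
qed



definition supp :: "nat \<Rightarrow> (nat \<Rightarrow> nat \<Rightarrow> nat \<Rightarrow> real) \<Rightarrow> bool" where
  "supp n c \<longleftrightarrow> (\<forall>i j l. c i j l \<noteq> 0 \<longrightarrow> i + j + l = n)"

lemma supp_bx3: "supp n c \<Longrightarrow> bx3 (Suc n) c"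
  unfolding supp_def bx3_def by force

lemma ev_hom:
  assumes "supp n c"
  shows "ev (Suc n) c a b d = (\<Sum>i\<le>n. \<Sum>j\<le>n - i. c i j (n - i - j) * a ^ i * b ^ j * d ^ (n - i - j))"
proof -
  have inner: "(\<Sum>l<Suc n. c i j l * a^i * b^j * d^l) =
      (if i + j \<le> n then c i j (n - i - j) * a ^ i * b ^ j * d ^ (n - i - j) else 0)" for i j
  proof -
    have "(\<Sum>l<Suc n. c i j l * a^i * b^j * d^l) =
        (\<Sum>l<Suc n. if l = n - i - j \<and> i + j \<le> n then c i j l * a^i * b^j * d^l else 0)"
    proof (intro sum.cong refl)
      fix l
      have "c i j l = 0" if "\<not> (l = n - i - j \<and> i + j \<le> n)"
      proof (rule ccontr)
        assume "c i j l \<noteq> 0"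
        then have "i + j + l = n" using assms unfolding supp_def by blast
        then show False using that by auto
      qed
      then show "c i j l * a^i * b^j * d^l = (if l = n - i - j \<and> i + j \<le> n then c i j l * a^i * b^j * d^l else 0)"
        by auto
    qed
    also have "\<dots> = (if i + j \<le> n then c i j (n - i - j) * a ^ i * b ^ j * d ^ (n - i - j) else 0)"
      by (cases "i + j \<le> n") (auto simp add: sum.delta)
    finally show ?thesis .
  qed
  have mid: "(\<Sum>j\<le>n. (if i + j \<le> n then g j else 0)) = (\<Sum>j\<le>n - i. g j)" if "i \<le> n" for i and g :: "nat \<Rightarrow> real"
  proof -
    have "(\<Sum>j\<le>n. (if i + j \<le> n then g j else 0)) = sum g {j \<in> {..n}. i + j \<le> n}"
      by (rule sum.inter_filter[symmetric]) simp
    also have "{j \<in> {..n}. i + j \<le> n} = {..n - i}" using that by auto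
    finally show ?thesis .
  qed
  have "ev (Suc n) c a b d = (\<Sum>i<Suc n. \<Sum>j<Suc n. (if i + j \<le> n then c i j (n - i - j) * a ^ i * b ^ j * d ^ (n - i - j) else 0))"
    unfolding ev_def inner ..
  also have "\<dots> = (\<Sum>i\<le>n. \<Sum>j\<le>n - i. c i j (n - i - j) * a ^ i * b ^ j * d ^ (n - i - j))"
    unfolding lessThan_Suc_atMost by (rule sum.cong[OF refl], rule mid) simp
  finally show ?thesis .
qed

lemma hom_poly_ev:
  assumes "supp n c" "\<And>a b d. p (a, b, d) = ev (Suc n) c a b d"
  shows "hom_poly n p"
proof -
  have "\<forall>a b d. p (a, b, d) = (\<Sum>i\<le>n. \<Sum>j\<le>n - i. c i j (n - i - j) * a ^ i * b ^ j * d ^ (n - i - j))"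
    using assms(2) ev_hom[OF assms(1)] by simp
  then show ?thesis unfolding hom_poly_def by (intro exI[of _ "\<lambda>i j. c i j (n - i - j)"])
qed

lemma ev_of_hom:
  assumes "hom_poly n p"
  obtains c where "supp n c" "\<And>a b d. p (a, b, d) = ev (Suc n) c a b d"
proof -
  obtain c2 where c2: "\<forall>a b d. p (a, b, d) = (\<Sum>i\<le>n. \<Sum>j\<le>n - i. c2 i j * a ^ i * b ^ j * d ^ (n - i - j))"
    using assms unfolding hom_poly_def by blast
  define c where "c i j l = (if i + j + l = n then c2 i j else 0)" for i j l
  have s: "supp n c" unfolding supp_def c_def by auto
  have "p (a, b, d) = ev (Suc n) c a b d" for a b d
    unfolding ev_hom[OF s] c2[rule_format] by (intro sum.cong refl) (auto simp: c_def)
  then show ?thesis using that s by blast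
qed

lemma vs: "vector_space fscale"
  unfolding vector_space_def fscale_def qscale_def
  by (auto simp: fun_eq_iff plus_quat_def qadd_def algebra_simps)



definition RR :: "nat \<Rightarrow> (nat \<Rightarrow> nat \<Rightarrow> nat \<Rightarrow> real) \<Rightarrow> (nat \<Rightarrow> nat \<Rightarrow> nat \<Rightarrow> real) \<Rightarrow> nat \<Rightarrow> nat \<Rightarrow> nat \<Rightarrow> real" where
"RR i P W s j l = (if s = 0 then
   real (Suc j) * real (Suc (Suc j)) * P 0 (Suc (Suc j)) l + real (Suc l) * real (Suc (Suc l)) * P 0 j (Suc (Suc l))
   + 2 * real (Suc i) * real (Suc j) * W 1 (Suc j) l + 2 * real (Suc i) * real (Suc l) * W 2 j (Suc l)
 else if s = 1 then
   - 2 * real (Suc i) * real (Suc j) * W 0 (Suc j) l + real (Suc j) * real (Suc (Suc j)) * P 1 (Suc (Suc j)) l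
   - real (Suc l) * real (Suc (Suc l)) * P 1 j (Suc (Suc l)) + 2 * real (Suc j) * real (Suc l) * P 2 (Suc j) (Suc l)
 else if s = 2 then
   - 2 * real (Suc i) * real (Suc l) * W 0 j (Suc l) + 2 * real (Suc j) * real (Suc l) * P 1 (Suc j) (Suc l)
   - real (Suc j) * real (Suc (Suc j)) * P 2 (Suc (Suc j)) l + real (Suc l) * real (Suc (Suc l)) * P 2 j (Suc (Suc l))
 else 0)"

lemma EE_RR: "s < 3 \<Longrightarrow> EE c s i j l = real (Suc i) * real (Suc (Suc i)) * c s (Suc (Suc i)) j l
   - RR i (\<lambda>s j l. c s i j l) (\<lambda>s j l. c s (Suc i) j l) s j l"
proof -
  assume "s < 3"
  then have "s = 0 \<or> s = 1 \<or> s = 2" by auto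
  then show ?thesis unfolding EE_def RR_def by (elim disjE) (simp_all add: algebra_simps)
qed

lemma RR_cong:
  assumes "\<forall>s j l. s < 3 \<longrightarrow> P s j l = P' s j l" "\<forall>s j l. s < 3 \<longrightarrow> W s j l = W' s j l"
  shows "RR i P W s j l = RR i P' W' s j l"
  using assms unfolding RR_def by simp

lemma RR_supp:
  assumes "\<forall>s j l. P s j l \<noteq> 0 \<longrightarrow> i + j + l = n" "\<forall>s j l. W s j l \<noteq> 0 \<longrightarrow> Suc i + j + l = n"
    "RR i P W s j l \<noteq> 0"
  shows "s < 3 \<and> Suc (Suc i) + j + l = n"
proof (rule ccontr)
  assume h: "\<not> (s < 3 \<and> Suc (Suc i) + j + l = n)"
  show False
  proof (cases "s < 3")
    case False then show False using assms(3) unfolding RR_def by auto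
  next
    case True
    then have ne: "Suc (Suc i) + j + l \<noteq> n" using h by auto
    have p: "P s' j' l' = 0" if "i + j' + l' \<noteq> n" for s' j' l' using assms(1) that by blast
    have q: "W s' j' l' = 0" if "Suc i + j' + l' \<noteq> n" for s' j' l' using assms(2) that by blast
    have "RR i P W s j l = 0" unfolding RR_def using ne by (simp add: p q)
    then show False using assms(3) by simp
  qed
qed

fun lay :: "(nat \<Rightarrow> nat \<Rightarrow> nat \<Rightarrow> real) \<Rightarrow> (nat \<Rightarrow> nat \<Rightarrow> nat \<Rightarrow> real) \<Rightarrow> nat \<Rightarrow> nat \<Rightarrow> nat \<Rightarrow> nat \<Rightarrow> real" where
  "lay A B 0 = A"
| "lay A B (Suc 0) = B"
| "lay A B (Suc (Suc i)) = (\<lambda>s j l. RR i (lay A B i) (lay A B (Suc i)) s j l / (real (Suc i) * real (Suc (Suc i))))"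

definition cof :: "(nat \<Rightarrow> nat \<Rightarrow> nat \<Rightarrow> real) \<Rightarrow> (nat \<Rightarrow> nat \<Rightarrow> nat \<Rightarrow> real) \<Rightarrow> nat \<Rightarrow> nat \<Rightarrow> nat \<Rightarrow> nat \<Rightarrow> real" where
  "cof A B s i j l = lay A B i s j l"

lemma cof_sol: "EE (cof A B) s i j l = 0"
proof (cases "s < 3")
  case True
  have e1: "(\<lambda>s j l. cof A B s i j l) = lay A B i" by (simp add: cof_def)
  have e2: "(\<lambda>s j l. cof A B s (Suc i) j l) = lay A B (Suc i)" by (simp add: cof_def)
  show ?thesis unfolding EE_RR[OF True] e1 e2 by (simp add: cof_def)
next
  case False then show ?thesis by (simp add: EE_def)
qed

lemma lay_supp:
  assumes "\<forall>s j l. A s j l \<noteq> 0 \<longrightarrow> s < 3 \<and> j + l = n" "\<forall>s j l. B s j l \<noteq> 0 \<longrightarrow> s < 3 \<and> Suc (j + l) = n"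
  shows "\<forall>s j l. lay A B i s j l \<noteq> 0 \<longrightarrow> s < 3 \<and> i + j + l = n"
proof -
  have "(\<forall>s j l. lay A B i s j l \<noteq> 0 \<longrightarrow> s < 3 \<and> i + j + l = n) \<and>
        (\<forall>s j l. lay A B (Suc i) s j l \<noteq> 0 \<longrightarrow> s < 3 \<and> Suc i + j + l = n)"
  proof (induction i)
    case 0 then show ?case using assms by simp
  next
    case (Suc i)
    have "lay A B (Suc (Suc i)) s j l \<noteq> 0 \<longrightarrow> s < 3 \<and> Suc (Suc i) + j + l = n" for s j l
    proof
      assume "lay A B (Suc (Suc i)) s j l \<noteq> 0"
      then have "RR i (lay A B i) (lay A B (Suc i)) s j l \<noteq> 0" by simp
      then show "s < 3 \<and> Suc (Suc i) + j + l = n"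
        by (rule RR_supp[rotated 2]) (use Suc.IH in blast)+
    qed
    then show ?case using Suc.IH by blast
  qed
  then show ?thesis by blast
qed

lemma sol_unique:
  assumes "\<forall>s i j l. EE c s i j l = 0" "\<forall>s i j l. EE c' s i j l = 0"
    "\<forall>s j l. s < 3 \<longrightarrow> c s 0 j l = c' s 0 j l" "\<forall>s j l. s < 3 \<longrightarrow> c s 1 j l = c' s 1 j l"
    "s < 3"
  shows "c s i j l = c' s i j l"
proof -
  have "(\<forall>s j l. s < 3 \<longrightarrow> c s i j l = c' s i j l) \<and> (\<forall>s j l. s < 3 \<longrightarrow> c s (Suc i) j l = c' s (Suc i) j l)"
  proof (induction i)
    case 0 then show ?case using assms(3,4) by simp
  next
    case (Suc i)
    have "c s (Suc (Suc i)) j l = c' s (Suc (Suc i)) j l" if s3: "s < 3" for s j l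
    proof -
      have r: "RR i (\<lambda>s j l. c s i j l) (\<lambda>s j l. c s (Suc i) j l) s j l =
               RR i (\<lambda>s j l. c' s i j l) (\<lambda>s j l. c' s (Suc i) j l) s j l"
        by (rule RR_cong) (use Suc.IH in auto)
      have "real (Suc i) * real (Suc (Suc i)) * c s (Suc (Suc i)) j l =
            real (Suc i) * real (Suc (Suc i)) * c' s (Suc (Suc i)) j l"
        using EE_RR[OF s3, of c i j l] EE_RR[OF s3, of c' i j l] assms(1,2) r by auto
      then show ?thesis by simp
    qed
    then show ?case using Suc.IH by blast
  qed
  then show ?thesis using assms(5) by blast
qed

lemma EE_lin: "EE (\<lambda>s i j l. a * c s i j l + c' s i j l) s i j l = a * EE c s i j l + EE c' s i j l"
  unfolding EE_def by (simp add: algebra_simps)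

lemma EE_sum:
  assumes "finite X"
  shows "EE (\<lambda>s i j l. \<Sum>x\<in>X. u x * c x s i j l) s i j l = (\<Sum>x\<in>X. u x * EE (c x) s i j l)"
  using assms
proof (induction X arbitrary: s i j l rule: finite_induct)
  case empty then show ?case by (simp add: EE_def)
next
  case (insert x F)
  have "EE (\<lambda>s i j l. \<Sum>y\<in>insert x F. u y * c y s i j l) s i j l =
        EE (\<lambda>s i j l. u x * c x s i j l + (\<Sum>y\<in>F. u y * c y s i j l)) s i j l"
    using insert by simp
  also have "\<dots> = u x * EE (c x) s i j l + EE (\<lambda>s i j l. \<Sum>y\<in>F. u y * c y s i j l) s i j l"
    by (rule EE_lin)
  finally show ?case using insert by simp
qed

lemma G_sum:
  assumes "finite X"
  shows "G N (\<lambda>s i j l. \<Sum>x\<in>X. u x * c x s i j l) = (\<Sum>x\<in>X. fscale (u x) (G N (c x)))"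
  using assms
proof (induction X rule: finite_induct)
  case empty then show ?case by (simp add: fun_eq_iff G_def ev_0 zero_quat_def split: prod.splits)
next
  case (insert x F)
  have "G N (\<lambda>s i j l. \<Sum>y\<in>insert x F. u y * c y s i j l) =
        G N (\<lambda>s i j l. u x * c x s i j l + (\<Sum>y\<in>F. u y * c y s i j l))"
    using insert by simp
  also have "\<dots> = fscale (u x) (G N (c x)) + G N (\<lambda>s i j l. \<Sum>y\<in>F. u y * c y s i j l)"
    by (simp add: fun_eq_iff G_def ev_add ev_scale fscale_def qscale_def plus_quat_def qadd_def split: prod.splits)
  finally show ?case using insert by simp
qed

lemma G_inj:
  assumes "\<forall>s. bx3 N (c1 s)" "\<forall>s. bx3 N (c2 s)" "G N c1 = G N c2" "s < 4"
  shows "c1 s i j l = c2 s i j l"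
proof -
  have b: "bx3 N (\<lambda>i j l. c1 s i j l - c2 s i j l)" using assms(1,2) unfolding bx3_def by simp
  have "s = 0 \<or> s = 1 \<or> s = 2 \<or> s = 3" using assms(4) by auto
  then have "\<forall>a b d. ev N (c1 s) a b d = ev N (c2 s) a b d"
    using assms(3) unfolding fun_eq_iff by (auto simp: G_def)
  then have "\<forall>a b d. ev N (\<lambda>i j l. c1 s i j l - c2 s i j l) a b d = 0" by (simp add: ev_diff)
  from ev_zero[OF b this] show ?thesis by simp
qed



definition Iset :: "nat \<Rightarrow> (nat \<times> nat \<times> nat) set" where
  "Iset n = {(s, t, j). s < 3 \<and> ((t = 0 \<and> j \<le> n) \<or> (t = 1 \<and> j < n))}"

definition Ad :: "nat \<Rightarrow> nat \<times> nat \<times> nat \<Rightarrow> nat \<Rightarrow> nat \<Rightarrow> nat \<Rightarrow> real" where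
  "Ad n x s j l = (if x = (s, 0, j) \<and> j + l = n then 1 else 0)"
definition Bd :: "nat \<Rightarrow> nat \<times> nat \<times> nat \<Rightarrow> nat \<Rightarrow> nat \<Rightarrow> nat \<Rightarrow> real" where
  "Bd n x s j l = (if x = (s, 1, j) \<and> Suc (j + l) = n then 1 else 0)"
definition cx :: "nat \<Rightarrow> nat \<times> nat \<times> nat \<Rightarrow> nat \<Rightarrow> nat \<Rightarrow> nat \<Rightarrow> nat \<Rightarrow> real" where
  "cx n x = cof (Ad n x) (Bd n x)"
definition bas :: "nat \<Rightarrow> nat \<times> nat \<times> nat \<Rightarrow> pt \<Rightarrow> quat" where
  "bas n x = G (Suc n) (cx n x)"

lemma Iset_eq: "Iset n = {..<3} \<times> (({0} \<times> {..n}) \<union> ({1} \<times> {..<n}))"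
  unfolding Iset_def by auto

lemma finite_Iset: "finite (Iset n)"
  unfolding Iset_eq by simp

lemma card_Iset: "card (Iset n) = 6 * n + 3"
proof -
  have "card (({0::nat} \<times> {..n}) \<union> ({1} \<times> {..<n})) = card ({0::nat} \<times> {..n}) + card ({1::nat} \<times> {..<n})"
    by (rule card_Un_disjoint) auto
  also have "\<dots> = Suc n + n" by (simp add: card_cartesian_product)
  finally show ?thesis unfolding Iset_eq by (simp add: card_cartesian_product)
qed

lemma cx_supp:
  assumes "x \<in> Iset n" "cx n x s i j l \<noteq> 0"
  shows "s < 3 \<and> i + j + l = n"
proof -
  have a: "\<forall>s j l. Ad n x s j l \<noteq> 0 \<longrightarrow> s < 3 \<and> j + l = n"
    using assms(1) unfolding Ad_def Iset_def by auto
  have b: "\<forall>s j l. Bd n x s j l \<noteq> 0 \<longrightarrow> s < 3 \<and> Suc (j + l) = n"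
    using assms(1) unfolding Bd_def Iset_def by auto
  show ?thesis using lay_supp[OF a b, of i] assms(2) unfolding cx_def cof_def by blast
qed

lemma cx_supp': "x \<in> Iset n \<Longrightarrow> supp n (cx n x s)"
  unfolding supp_def using cx_supp by blast

lemma cx_bx3: "x \<in> Iset n \<Longrightarrow> \<forall>s. bx3 (Suc n) (cx n x s)"
  using cx_supp' supp_bx3 by blast

lemma cx_3: "x \<in> Iset n \<Longrightarrow> cx n x 3 i j l = 0"
  using cx_supp by fastforce

lemma extr_lem:
  assumes "x \<in> Iset n" "(s1, t1, j1) \<in> Iset n"
  shows "cx n x s1 t1 j1 (n - t1 - j1) = (if x = (s1, t1, j1) then 1 else 0)"
proof -
  have "t1 = 0 \<and> j1 \<le> n \<or> t1 = 1 \<and> j1 < n" using assms(2) unfolding Iset_def by auto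
  then show ?thesis
  proof
    assume h: "t1 = 0 \<and> j1 \<le> n"
    then show ?thesis by (auto simp: cx_def cof_def Ad_def)
  next
    assume h: "t1 = 1 \<and> j1 < n"
    then show ?thesis by (auto simp: cx_def cof_def Bd_def)
  qed
qed

lemma bas_Infr: assumes "x \<in> Iset n" shows "bas n x \<in> Infr n"
proof -
  have bx: "\<forall>s. bx3 (Suc n) (cx n x s)" using cx_bx3[OF assms] .
  have c3: "\<And>i j l. cx n x 3 i j l = 0" using cx_3[OF assms] .
  have z3: "cx n x 3 = (\<lambda>i j l. 0)" using c3 by (intro ext) auto
  have q3: "\<forall>y. q3 (bas n x y) = 0"
    by (auto simp: bas_def G_def z3 ev_0 split: prod.splits)
  have h: "hom_poly n (\<lambda>y. q0 (bas n x y))" "hom_poly n (\<lambda>y. q1 (bas n x y))" "hom_poly n (\<lambda>y. q2 (bas n x y))"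
    by (rule hom_poly_ev[OF cx_supp'[OF assms]]; simp add: bas_def G_simp)+
  have pde: "\<forall>y. dbar_left (dbar_right (bas n x)) y = Q 0 0 0 0"
    unfolding bas_def pde_iff[OF bx c3] using cof_sol unfolding cx_def by blast
  show ?thesis unfolding Infr_def using q3 h pde by blast
qed

lemma bx3_sum:
  assumes "\<forall>x\<in>X. \<forall>s. bx3 N (c x s)"
  shows "bx3 N (\<lambda>i j l. \<Sum>x\<in>X. u x * c x s i j l)"
  using assms unfolding bx3_def by simp

lemma G_zero: "G N (\<lambda>s i j l. 0) = 0"
  by (simp add: fun_eq_iff G_def ev_0 zero_quat_def split: prod.splits)

lemma bas_inj: "inj_on (bas n) (Iset n)"
proof (rule inj_onI)
  fix x y assume x: "x \<in> Iset n" and y: "y \<in> Iset n" and e: "bas n x = bas n y"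
  obtain s1 t1 j1 where yy: "y = (s1, t1, j1)" by (cases y) auto
  have s1: "s1 < 4" using y unfolding yy Iset_def by auto
  have "cx n x s1 t1 j1 (n - t1 - j1) = cx n y s1 t1 j1 (n - t1 - j1)"
    by (rule G_inj[OF cx_bx3[OF x] cx_bx3[OF y] _ s1]) (use e in \<open>simp add: bas_def\<close>)
  then show "x = y" using extr_lem[OF x, of s1 t1 j1] extr_lem[OF y, of s1 t1 j1] y unfolding yy
    by (auto split: if_splits)
qed

interpretation V: vector_space fscale by (rule vs)

lemma bas_indep: "V.independent (bas n ` Iset n)"
proof -
  have "(\<forall>v\<in>bas n ` Iset n. u v = 0)" if h: "(\<Sum>v\<in>bas n ` Iset n. fscale (u v) v) = 0" for u
  proof
    fix v assume "v \<in> bas n ` Iset n"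
    then obtain y where y: "y \<in> Iset n" and v: "v = bas n y" by auto
    obtain s1 t1 j1 where yy: "y = (s1, t1, j1)" by (cases y) auto
    have s1: "s1 < 4" using y unfolding yy Iset_def by auto
    have "(\<Sum>x\<in>Iset n. fscale (u (bas n x)) (bas n x)) = 0"
      using h by (simp add: sum.reindex[OF bas_inj])
    then have g: "G (Suc n) (\<lambda>s i j l. \<Sum>x\<in>Iset n. u (bas n x) * cx n x s i j l) = G (Suc n) (\<lambda>s i j l. 0)"
      unfolding G_zero bas_def G_sum[OF finite_Iset] .
    have "(\<Sum>x\<in>Iset n. u (bas n x) * cx n x s1 t1 j1 (n - t1 - j1)) = 0"
      using G_inj[OF _ _ g s1, of t1 j1 "n - t1 - j1"] bx3_sum[of "Iset n" "Suc n" "cx n"] cx_bx3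
        unfolding bx3_def by auto
    moreover have "(\<Sum>x\<in>Iset n. u (bas n x) * cx n x s1 t1 j1 (n - t1 - j1)) =
       (\<Sum>x\<in>Iset n. if x = y then u (bas n x) else 0)"
      by (rule sum.cong[OF refl]) (use extr_lem y yy in auto)
    ultimately show "u v = 0" using y v by (simp add: sum.delta[OF finite_Iset])
  qed
  then show ?thesis by (intro V.independent_if_scalars_zero) (use finite_Iset in auto)
qed



lemma Infr_span: assumes "f \<in> Infr n" shows "f \<in> V.span (bas n ` Iset n)"
proof -
  have f3: "\<forall>x. q3 (f x) = 0" and h0: "hom_poly n (\<lambda>x. q0 (f x))" and h1: "hom_poly n (\<lambda>x. q1 (f x))"
    and h2: "hom_poly n (\<lambda>x. q2 (f x))" and pde: "\<forall>x. dbar_left (dbar_right f) x = Q 0 0 0 0"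
    using assms unfolding Infr_def by auto
  obtain c0 where c0: "supp n c0" "\<And>a b d. q0 (f (a, b, d)) = ev (Suc n) c0 a b d"
    using ev_of_hom[OF h0] by blast
  obtain c1 where c1: "supp n c1" "\<And>a b d. q1 (f (a, b, d)) = ev (Suc n) c1 a b d"
    using ev_of_hom[OF h1] by blast
  obtain c2 where c2: "supp n c2" "\<And>a b d. q2 (f (a, b, d)) = ev (Suc n) c2 a b d"
    using ev_of_hom[OF h2] by blast
  define c where "c (s::nat) = (if s = 0 then c0 else if s = 1 then c1 else if s = 2 then c2 else (\<lambda>i j l. 0))" for s
  have z3: "c 3 = (\<lambda>i j l. 0)" by (simp add: c_def)
  have fG: "f = G (Suc n) c"
  proof
    fix x show "f x = G (Suc n) c x"
    proof (cases x)
      case (fields a b d)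
      show ?thesis unfolding fields G_simp
        by (rule quat.expand) (simp add: c_def c0 c1 c2 z3 ev_0 f3)
    qed
  qed
  have cs: "supp n (c s)" for s using c0 c1 c2 by (simp add: c_def supp_def)
  have bx: "\<forall>s. bx3 (Suc n) (c s)" using cs supp_bx3 by blast
  have c3: "\<And>i j l. c 3 i j l = 0" by (simp add: c_def)
  have EEc: "\<forall>s i j l. EE c s i j l = 0" using pde_iff[OF bx c3] pde unfolding fG by blast
  define th where "th y = (case y of (s1, t1, j1) \<Rightarrow> c s1 t1 j1 (n - t1 - j1))" for y
  define c' where "c' = (\<lambda>s i j l. \<Sum>x\<in>Iset n. th x * cx n x s i j l)"
  have EEc': "\<forall>s i j l. EE c' s i j l = 0"
    unfolding c'_def EE_sum[OF finite_Iset] cx_def cof_sol by simp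
  have l0: "c s 0 j l = c' s 0 j l" if s3: "s < 3" for s j l
  proof -
    have "c' s 0 j l = (\<Sum>x\<in>Iset n. if x = (s, 0, j) then (if j + l = n then th x else 0) else 0)"
      unfolding c'_def cx_def cof_def by (intro sum.cong refl) (auto simp: Ad_def)
    also have "\<dots> = (if j + l = n then th (s, 0, j) else 0)"
      using s3 by (subst sum.delta[OF finite_Iset]) (auto simp: Iset_def)
    also have "\<dots> = c s 0 j l"
      using cs[of s] unfolding th_def supp_def by (cases "c s 0 j l = 0"; cases "c s 1 j l = 0") force+
    finally show ?thesis by simp
  qed
  have l1: "c s 1 j l = c' s 1 j l" if s3: "s < 3" for s j l
  proof -
    have "c' s 1 j l = (\<Sum>x\<in>Iset n. if x = (s, 1, j) then (if Suc (j + l) = n then th x else 0) else 0)"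
      unfolding c'_def cx_def cof_def by (intro sum.cong refl) (auto simp: Bd_def)
    also have "\<dots> = (if Suc (j + l) = n then th (s, 1, j) else 0)"
      using s3 by (subst sum.delta[OF finite_Iset]) (auto simp: Iset_def)
    also have "\<dots> = c s 1 j l"
      using cs[of s] unfolding th_def supp_def by (cases "c s 0 j l = 0"; cases "c s 1 j l = 0") force+
    finally show ?thesis by simp
  qed
  have cc: "c = c'"
  proof (intro ext)
    fix s i j l
    show "c s i j l = c' s i j l"
    proof (cases "s < 3")
      case True then show ?thesis using sol_unique[OF EEc EEc'] l0 l1 by blast
    next
      case False
      then have "cx n x s i j l = 0" if "x \<in> Iset n" for x using cx_supp[OF that] by blast
      then show ?thesis using False by (simp add: c_def c'_def)
    qed
  qed
  have "f = (\<Sum>x\<in>Iset n. fscale (th x) (bas n x))"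
    unfolding fG cc c'_def bas_def by (rule G_sum[OF finite_Iset])
  also have "\<dots> \<in> V.span (bas n ` Iset n)"
    by (intro V.span_sum V.span_scale V.span_base) auto
  finally show ?thesis .
qed

theorem theorem3p4:
  fixes n :: nat
  shows "vector_space.dim fscale (Infr n) = 6 * n + 3"
proof -
  have "V.dim (Infr n) = 6 * n + 3"
  proof (rule V.dim_unique[of "bas n ` Iset n"])
    show "bas n ` Iset n \<subseteq> Infr n" using bas_Infr by blast
    show "Infr n \<subseteq> V.span (bas n ` Iset n)" using Infr_span by blast
    show "V.independent (bas n ` Iset n)" by (rule bas_indep)
    show "card (bas n ` Iset n) = 6 * n + 3" using card_image[OF bas_inj] card_Iset by simp
  qed
  then show ?thesis .
qed


end
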